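(* Suppose $X_1,\ldots,X_{2n}$ are i.i.d. $N(\theta^*,\sigma^2)$ with $\sigma^2>0$, and use the squared-error loss $\ell(\theta;x)=(\theta-x)^2$ on $\Theta=\mathbb{R}$. Consider the offline GUe-value $G_S(\theta)=\exp[-\omega n\{\widehat R_{S_2}(\widehat\theta)-\widehat R_{S_2}(\theta)\}]$ with $S_2=\{X_1,\ldots,X_n\}$, $S_1=\{X_{n+1},\ldots,X_{2n}\}$, $\widehat\theta$ the sample mean of $S_1$, $\widehat R_{S_2}(\theta)=n^{-1}\sum_{i=1}^n(\theta-X_i)^2$, and learning rate $\omega>0$. Define $$b^{(\omega)}_{\alpha,\sigma^2}(z)=\frac{\log(1/\alpha)}{2\omega\sigma^2 z}+\frac z2.$$ Then the learning rate $\omega$ for which the confidence set $\{\theta:G_S(\theta)<1/\alpha\}$ has exactly $(1-\alpha)$-level coverage of $\theta^*$ (equivalently $\Pr\{G_S(\theta^* )\ge1/\alpha\}=\alpha$) is given by the solution to $$\int_0^\infty\int_{b^{(\omega)}_{\alpha,\sigma^2}(z_2)}^\infty\frac{e^{-(z_1^2+z_2^2)/2}}{2\pi}\,dz_1\,dz_2+\int_{-\infty}^0\int_{-\infty}^{b^{(\omega)}_{\alpha,\sigma^2}(z_2)}\frac{e^{-(z_1^2+z_2^2)/2}}{2\pi}\,dz_1\,dz_2=\alpha.$$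
   Context: Here $\alpha\in(0,1)$ is a fixed significance level. The offline GUe-value is the quantity $\exp[-\omega n_2\{\widehat R_{S_2}(\widehat\theta_{S_1})-\widehat R_{S_2}(\theta)\}]$ built from a split of the sample into $S_1$ (used to compute the empirical risk minimizer $\widehat\theta_{S_1}$) and $S_2$ (of size $n_2$, used to evaluate the empirical risk), here with $n_2=n$. *)

theory Defs
  imports "HOL-Probability.Probability"
begin

text \<open>Sample x_1,...,x_{2n} given as a function x :: nat => real (indices 1..2n).
  S_2 = {x_1..x_n}, S_1 = {x_{n+1}..x_{2n}}.\<close>

definition emp_risk_S2 :: "nat \<Rightarrow> (nat \<Rightarrow> real) \<Rightarrow> real \<Rightarrow> real" where
  "emp_risk_S2 n x \<theta> = (\<Sum>i=1..n. (\<theta> - x i)^2) / real n"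

definition theta_hat_S1 :: "nat \<Rightarrow> (nat \<Rightarrow> real) \<Rightarrow> real" where
  "theta_hat_S1 n x = (\<Sum>i=n+1..2*n. x i) / real n"

definition GUe_offline :: "real \<Rightarrow> nat \<Rightarrow> (nat \<Rightarrow> real) \<Rightarrow> real \<Rightarrow> real" where
  "GUe_offline \<omega> n x \<theta> =
     exp (- \<omega> * real n * (emp_risk_S2 n x (theta_hat_S1 n x) - emp_risk_S2 n x \<theta>))"

definition b_fun :: "real \<Rightarrow> real \<Rightarrow> real \<Rightarrow> real \<Rightarrow> real" where
  "b_fun \<alpha> \<sigma>2 \<omega> z = ln (1 / \<alpha>) / (2 * \<omega> * \<sigma>2 * z) + z / 2"

end

theory Submission
  imports Defs
begin

lemma sq_sum_expand:
  fixes x :: "nat \<Rightarrow> real"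
  shows "(\<Sum>i\<in>A. (t - x i)^2) = real (card A) * t^2 - 2 * t * (\<Sum>i\<in>A. x i) + (\<Sum>i\<in>A. (x i)^2)"
  by (simp add: power2_diff sum.distrib sum_subtractf sum_distrib_left)

lemma region_iff:
  fixes k L z1 z2 :: real
  assumes "k > 0" "L > 0"
  shows "L \<le> k * z2 * (2 * z1 - z2) \<longleftrightarrow>
    (0 < z2 \<and> L / (2 * k * z2) + z2 / 2 \<le> z1) \<or> (z2 < 0 \<and> z1 \<le> L / (2 * k * z2) + z2 / 2)"
proof (cases "z2 > 0")
  case True
  have "L / (2 * k * z2) + z2 / 2 \<le> z1 \<longleftrightarrow> L + k*z2^2 \<le> 2*k*z2*z1"
    using True assms by (simp add: field_simps power2_eq_square)
  then show ?thesis using True by (auto simp: algebra_simps power2_eq_square)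
next
  case False
  show ?thesis
  proof (cases "z2 < 0")
    case True
    have d: "2*k*z2 < 0" using True assms by (simp add: mult_pos_neg)
    have "L / (2 * k * z2) + z2 / 2 = (L + k*z2^2) / (2*k*z2)"
      using True assms by (simp add: field_simps power2_eq_square)
    then have "z1 \<le> L / (2 * k * z2) + z2 / 2 \<longleftrightarrow> L + k*z2^2 \<le> z1 * (2*k*z2)"
      using d by (simp add: le_divide_eq)
    then have "z1 \<le> L / (2 * k * z2) + z2 / 2 \<longleftrightarrow> L + k*z2^2 \<le> 2*k*z2*z1"
      by (simp add: algebra_simps)
    then show ?thesis using True by (auto simp: algebra_simps power2_eq_square)
  next
    case False
    then have "z2 = 0" using \<open>\<not> z2 > 0\<close> by simp
    then show ?thesis using assms by simp
  qed
qed

lemma exponent_eq: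
  fixes n :: nat and x :: "nat \<Rightarrow> real" and \<theta> \<sigma> \<omega> \<tau> z1 z2 :: real
  assumes n: "n \<ge> 1" and tau: "\<tau>^2 = real n * \<sigma>^2"
    and s1: "(\<Sum>i=n+1..2*n. x i) = real n * \<theta> + \<tau> * z2"
    and s2: "(\<Sum>i=1..n. x i) = real n * \<theta> + \<tau> * z1"
  shows "- \<omega> * real n * (emp_risk_S2 n x (theta_hat_S1 n x) - emp_risk_S2 n x \<theta>)
     = \<omega> * \<sigma>^2 * z2 * (2 * z1 - z2)"
proof -
  have np: "real n > 0" using n by simp
  define Q where "Q = (\<Sum>i=1..n. (x i)^2)"
  have th: "theta_hat_S1 n x = \<theta> + \<tau> * z2 / real n"
    unfolding theta_hat_S1_def s1 using np by (simp add: field_simps)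
  have e: "\<And>t. emp_risk_S2 n x t = (real n * t^2 - 2 * t * (real n * \<theta> + \<tau> * z1) + Q) / real n"
    unfolding emp_risk_S2_def sq_sum_expand s2 Q_def by simp
  have "- \<omega> * real n * (emp_risk_S2 n x (theta_hat_S1 n x) - emp_risk_S2 n x \<theta>)
     = - \<omega> * (\<tau>^2 * z2^2 / real n - 2 * \<tau>^2 * z1 * z2 / real n)"
    unfolding e th using np by (simp add: field_simps power2_eq_square)
  also have "\<dots> = \<omega> * \<sigma>^2 * z2 * (2 * z1 - z2)"
    unfolding tau using np by (simp add: field_simps power2_eq_square)
  finally show ?thesis .
qed


lemma std_prod:
  "std_normal_density x * std_normal_density y = exp (- (y^2 + x^2) / 2) / (2 * pi)"
  unfolding std_normal_density_def
  by (simp add: mult_exp_exp real_sqrt_mult[symmetric] add_divide_distrib)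

theorem proposition1:
  fixes M :: "'a measure" and X :: "nat \<Rightarrow> 'a \<Rightarrow> real"
    and n :: nat and \<theta>s \<sigma> \<omega> \<alpha> :: real
  assumes "prob_space M"
    and "n \<ge> 1"
    and "\<sigma> > 0"
    and "\<omega> > 0"
    and "0 < \<alpha>" and "\<alpha> < 1"
    and "prob_space.indep_vars M (\<lambda>_. borel) X {1..2*n}"
    and "\<And>i. i \<in> {1..2*n} \<Longrightarrow> distributed M lborel (X i) (normal_density \<theta>s \<sigma>)"
  shows "measure M {s \<in> space M. GUe_offline \<omega> n (\<lambda>i. X i s) \<theta>s \<ge> 1 / \<alpha>} = \<alpha>
    \<longleftrightarrow>
    (LINT z2:{0<..}|lborel. (LINT z1:{b_fun \<alpha> (\<sigma>^2) \<omega> z2..}|lborel.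
        exp (- (z1^2 + z2^2) / 2) / (2 * pi)))
    + (LINT z2:{..<0}|lborel. (LINT z1:{..b_fun \<alpha> (\<sigma>^2) \<omega> z2}|lborel.
        exp (- (z1^2 + z2^2) / 2) / (2 * pi))) = \<alpha>"
proof -
  interpret prob_space M by fact
  note ind = assms(7) and nd = assms(8)
  have np: "real n > 0" using assms(2) by simp
  define \<tau> where "\<tau> = sqrt (real n * \<sigma>^2)"
  have taup: "\<tau> > 0" using np assms(3) by (simp add: \<tau>_def)
  have tau2: "\<tau>^2 = real n * \<sigma>^2" using np by (simp add: \<tau>_def)
  define A1 where "A1 = {n+1..2*n}"
  define A2 where "A2 = {1..n}"
  define Z2 where "Z2 s = ((\<Sum>i\<in>A1. X i s) - real n * \<theta>s) / \<tau>" for s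
  define Z1 where "Z1 s = ((\<Sum>i\<in>A2. X i s) - real n * \<theta>s) / \<tau>" for s
  have cardA1: "card A1 = n" and cardA2: "card A2 = n" by (simp_all add: A1_def A2_def)
  have A1sub: "A1 \<subseteq> {1..2*n}" and A2sub: "A2 \<subseteq> {1..2*n}" by (auto simp: A1_def A2_def)
  have A1ne: "A1 \<noteq> {}" and A2ne: "A2 \<noteq> {}" using assms(2) by (auto simp: A1_def A2_def)
  have dsum: "distributed M lborel (\<lambda>x. \<Sum>i\<in>A. X i x) (normal_density (real n * \<theta>s) \<tau>)"
    if "A \<subseteq> {1..2*n}" "A \<noteq> {}" "card A = n" for A
  proof -
    have fin: "finite A" using that(1) finite_subset by blast
    have "distributed M lborel (\<lambda>x. \<Sum>i\<in>A. X i x)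
      (normal_density (\<Sum>i\<in>A. \<theta>s) (sqrt (\<Sum>i\<in>A. \<sigma>^2)))"
      using that fin assms(3)
      by (intro sum_indep_normal[where \<sigma>="\<lambda>_. \<sigma>"] indep_vars_subset[OF ind] nd) auto
    then show ?thesis using that by (simp add: \<tau>_def)
  qed
  have dZ2: "distributed M lborel Z2 std_normal_density"
    using dsum[OF A1sub A1ne cardA1] normal_standard_normal_convert[OF taup]
    unfolding Z2_def by simp
  have dZ1: "distributed M lborel Z1 std_normal_density"
    using dsum[OF A2sub A2ne cardA2] normal_standard_normal_convert[OF taup]
    unfolding Z1_def by simp
  have indZ: "indep_var lborel Z2 lborel Z1"
  proof -
    have dis: "A1 \<inter> A2 = {}" by (auto simp: A1_def A2_def)
    have fA1: "finite A1" "finite A2" by (simp_all add: A1_def A2_def)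
    have "indep_var lborel ((\<lambda>\<omega>. ((\<Sum>i\<in>A1. \<omega> i) - real n * \<theta>s) / \<tau>) \<circ> (\<lambda>\<omega>. restrict (\<lambda>i. X i \<omega>) A1))
       lborel ((\<lambda>\<omega>. ((\<Sum>i\<in>A2. \<omega> i) - real n * \<theta>s) / \<tau>) \<circ> (\<lambda>\<omega>. restrict (\<lambda>i. X i \<omega>) A2))"
      by (rule indep_var_compose[OF indep_var_restrict[OF ind dis A1sub A2sub]]) (use fA1 in auto)
    also have "((\<lambda>\<omega>. ((\<Sum>i\<in>A1. \<omega> i) - real n * \<theta>s) / \<tau>) \<circ> (\<lambda>\<omega>. restrict (\<lambda>i. X i \<omega>) A1)) = Z2"
      by (auto simp: Z2_def fun_eq_iff)
    also have "((\<lambda>\<omega>. ((\<Sum>i\<in>A2. \<omega> i) - real n * \<theta>s) / \<tau>) \<circ> (\<lambda>\<omega>. restrict (\<lambda>i. X i \<omega>) A2)) = Z1"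
      by (auto simp: Z1_def fun_eq_iff)
    finally show ?thesis .
  qed
  define F where "F p = exp (- ((snd p)^2 + (fst p)^2) / 2) / (2 * pi)" for p :: "real \<times> real"
  have dJ0: "distributed M (lborel \<Otimes>\<^sub>M lborel) (\<lambda>s. (Z2 s, Z1 s))
     (\<lambda>(x, y). ennreal (std_normal_density x) * ennreal (std_normal_density y))"
    by (rule distributed_joint_indep[OF _ _ dZ2 dZ1 indZ]) (simp_all add: lborel.sigma_finite_measure_axioms)
  have dJ: "distributed M (lborel \<Otimes>\<^sub>M lborel) (\<lambda>s. (Z2 s, Z1 s)) (\<lambda>p. ennreal (F p))"
  proof -
    have "(\<lambda>(x, y). ennreal (std_normal_density x) * ennreal (std_normal_density y)) = (\<lambda>p. ennreal (F p))"
    proof (rule ext, clarify)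
      fix x y :: real
      have "ennreal (std_normal_density x) * ennreal (std_normal_density y)
          = ennreal (std_normal_density x * std_normal_density y)"
        by (rule ennreal_mult[symmetric]) simp_all
      also have "\<dots> = ennreal (F (x, y))" unfolding F_def std_prod by simp
      finally show "ennreal (std_normal_density x) * ennreal (std_normal_density y) = ennreal (F (x, y))" .
    qed
    then show ?thesis using dJ0 by simp
  qed
  define b where "b = b_fun \<alpha> (\<sigma>^2) \<omega>"
  define R1 where "R1 = {p::real\<times>real. 0 < fst p \<and> b (fst p) \<le> snd p}"
  define R2 where "R2 = {p::real\<times>real. fst p < 0 \<and> snd p \<le> b (fst p)}"
  have mR1: "R1 \<in> sets (lborel \<Otimes>\<^sub>M lborel)"
  proof -
    have "Measurable.pred (lborel \<Otimes>\<^sub>M lborel) (\<lambda>p::real\<times>real. 0 < fst p \<and> b (fst p) \<le> snd p)"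
      unfolding b_def b_fun_def by measurable
    then show ?thesis by (simp add: R1_def Measurable.pred_def space_pair_measure)
  qed
  have mR2: "R2 \<in> sets (lborel \<Otimes>\<^sub>M lborel)"
  proof -
    have "Measurable.pred (lborel \<Otimes>\<^sub>M lborel) (\<lambda>p::real\<times>real. fst p < 0 \<and> snd p \<le> b (fst p))"
      unfolding b_def b_fun_def by measurable
    then show ?thesis by (simp add: R2_def Measurable.pred_def space_pair_measure)
  qed
  have Zm: "(\<lambda>s. (Z2 s, Z1 s)) \<in> measurable M (lborel \<Otimes>\<^sub>M lborel)"
    using dJ by (rule distributed_measurable)
  have Fm: "F \<in> borel_measurable (lborel \<Otimes>\<^sub>M lborel)"
    unfolding F_def by measurable
  have F0: "\<And>p. 0 \<le> F p" unfolding F_def by simp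
  have intR: "integrable (lborel \<Otimes>\<^sub>M lborel) (\<lambda>p. F p * indicator R p)"
    if R: "R \<in> sets (lborel \<Otimes>\<^sub>M lborel)" for R
  proof -
    have "integrable M (\<lambda>s. indicator R (Z2 s, Z1 s) :: real)"
    proof (rule integrable_const_bound[where B=1])
      show "(\<lambda>s. indicator R (Z2 s, Z1 s) :: real) \<in> borel_measurable M"
        using measurable_comp[OF Zm borel_measurable_indicator[OF R]] by (simp add: comp_def)
    qed (simp add: indicator_def)
    then show ?thesis
      using distributed_integrable[OF dJ, of "indicator R"] R F0 by simp
  qed
  have measR: "measure M ((\<lambda>s. (Z2 s, Z1 s)) -` R \<inter> space M) = (\<integral>p. F p * indicator R p \<partial>(lborel \<Otimes>\<^sub>M lborel))"
    if R: "R \<in> sets (lborel \<Otimes>\<^sub>M lborel)" for R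
  proof -
    have "(\<integral>p. F p * indicator R p \<partial>(lborel \<Otimes>\<^sub>M lborel)) = (\<integral>s. indicator R (Z2 s, Z1 s) \<partial>M)"
      using distributed_integral[OF dJ, of "indicator R"] R F0 by simp
    also have "\<dots> = (\<integral>s. indicator ((\<lambda>s. (Z2 s, Z1 s)) -` R \<inter> space M) s \<partial>M)"
      by (rule Bochner_Integration.integral_cong) (auto simp: indicator_def)
    also have "\<dots> = measure M ((\<lambda>s. (Z2 s, Z1 s)) -` R \<inter> space M)"
      using Zm R by (simp add: measurable_sets)
    finally show ?thesis by simp
  qed
  have event: "{s \<in> space M. GUe_offline \<omega> n (\<lambda>i. X i s) \<theta>s \<ge> 1 / \<alpha>}
      = (\<lambda>s. (Z2 s, Z1 s)) -` (R1 \<union> R2) \<inter> space M"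
  proof (intro set_eqI iffI)
    fix s
    have s1: "(\<Sum>i=n+1..2*n. X i s) = real n * \<theta>s + \<tau> * Z2 s"
      using taup unfolding Z2_def A1_def by simp
    have s2: "(\<Sum>i=1..n. X i s) = real n * \<theta>s + \<tau> * Z1 s"
      using taup unfolding Z1_def A2_def by simp
    have L: "ln (1 / \<alpha>) > 0" using assms(5,6) by simp
    have k: "\<omega> * \<sigma>^2 > 0" using assms(3,4) by simp
    have "GUe_offline \<omega> n (\<lambda>i. X i s) \<theta>s = exp (\<omega> * \<sigma>^2 * Z2 s * (2 * Z1 s - Z2 s))"
      unfolding GUe_offline_def using exponent_eq[OF assms(2) tau2 s1 s2] by simp
    then have "GUe_offline \<omega> n (\<lambda>i. X i s) \<theta>s \<ge> 1 / \<alpha> \<longleftrightarrow>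
        ln (1 / \<alpha>) \<le> (\<omega> * \<sigma>^2) * Z2 s * (2 * Z1 s - Z2 s)"
    proof -
      have "\<And>y. 1 / \<alpha> \<le> exp y \<longleftrightarrow> ln (1 / \<alpha>) \<le> y"
        using assms(5) by (metis exp_le_cancel_iff exp_ln divide_pos_pos zero_less_one)
      then show ?thesis using \<open>GUe_offline \<omega> n (\<lambda>i. X i s) \<theta>s = _\<close> by (simp add: mult.assoc)
    qed
    also have "\<dots> \<longleftrightarrow> (Z2 s, Z1 s) \<in> R1 \<union> R2"
      unfolding region_iff[OF k L] R1_def R2_def b_def b_fun_def by (simp add: mult.assoc)
    finally have eq: "GUe_offline \<omega> n (\<lambda>i. X i s) \<theta>s \<ge> 1 / \<alpha> \<longleftrightarrow> (Z2 s, Z1 s) \<in> R1 \<union> R2" .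
    show "s \<in> (\<lambda>s. (Z2 s, Z1 s)) -` (R1 \<union> R2) \<inter> space M"
      if "s \<in> {s \<in> space M. GUe_offline \<omega> n (\<lambda>i. X i s) \<theta>s \<ge> 1 / \<alpha>}"
      using that eq by simp
    show "s \<in> {s \<in> space M. GUe_offline \<omega> n (\<lambda>i. X i s) \<theta>s \<ge> 1 / \<alpha>}"
      if "s \<in> (\<lambda>s. (Z2 s, Z1 s)) -` (R1 \<union> R2) \<inter> space M"
      using that eq by simp
  qed
  have Pinst: "pair_sigma_finite lborel lborel"
    by (simp add: pair_sigma_finite_def lborel.sigma_finite_measure_axioms)
  have t1: "(LINT z2:{0<..}|lborel. (LINT z1:{b z2..}|lborel. exp (- (z1^2 + z2^2) / 2) / (2 * pi)))
     = (\<integral>p. F p * indicator R1 p \<partial>(lborel \<Otimes>\<^sub>M lborel))"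
  proof -
    have "(LINT z2:{0<..}|lborel. (LINT z1:{b z2..}|lborel. exp (- (z1^2 + z2^2) / 2) / (2 * pi)))
       = (\<integral>z2. (\<integral>z1. F (z2, z1) * indicator R1 (z2, z1) \<partial>lborel) \<partial>lborel)"
      unfolding set_lebesgue_integral_def
      by (rule Bochner_Integration.integral_cong)
         (auto simp: indicator_def R1_def F_def intro!: Bochner_Integration.integral_cong)
    also have "\<dots> = (\<integral>p. F p * indicator R1 p \<partial>(lborel \<Otimes>\<^sub>M lborel))"
      using pair_sigma_finite.integral_fst'[OF Pinst intR[OF mR1]] by simp
    finally show ?thesis .
  qed
  have t2: "(LINT z2:{..<0}|lborel. (LINT z1:{..b z2}|lborel. exp (- (z1^2 + z2^2) / 2) / (2 * pi)))
     = (\<integral>p. F p * indicator R2 p \<partial>(lborel \<Otimes>\<^sub>M lborel))"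
  proof -
    have "(LINT z2:{..<0}|lborel. (LINT z1:{..b z2}|lborel. exp (- (z1^2 + z2^2) / 2) / (2 * pi)))
       = (\<integral>z2. (\<integral>z1. F (z2, z1) * indicator R2 (z2, z1) \<partial>lborel) \<partial>lborel)"
      unfolding set_lebesgue_integral_def
      by (rule Bochner_Integration.integral_cong)
         (auto simp: indicator_def R2_def F_def intro!: Bochner_Integration.integral_cong)
    also have "\<dots> = (\<integral>p. F p * indicator R2 p \<partial>(lborel \<Otimes>\<^sub>M lborel))"
      using pair_sigma_finite.integral_fst'[OF Pinst intR[OF mR2]] by simp
    finally show ?thesis .
  qed
  have dis: "R1 \<inter> R2 = {}" by (auto simp: R1_def R2_def)
  have "measure M {s \<in> space M. GUe_offline \<omega> n (\<lambda>i. X i s) \<theta>s \<ge> 1 / \<alpha>}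
     = (\<integral>p. F p * indicator (R1 \<union> R2) p \<partial>(lborel \<Otimes>\<^sub>M lborel))"
    unfolding event using mR1 mR2 by (intro measR) auto
  also have "\<dots> = (\<integral>p. F p * indicator R1 p + F p * indicator R2 p \<partial>(lborel \<Otimes>\<^sub>M lborel))"
    using dis by (intro Bochner_Integration.integral_cong) (auto simp: indicator_def)
  also have "\<dots> = (\<integral>p. F p * indicator R1 p \<partial>(lborel \<Otimes>\<^sub>M lborel)) + (\<integral>p. F p * indicator R2 p \<partial>(lborel \<Otimes>\<^sub>M lborel))"
    by (rule Bochner_Integration.integral_add[OF intR[OF mR1] intR[OF mR2]])
  finally have main: "measure M {s \<in> space M. GUe_offline \<omega> n (\<lambda>i. X i s) \<theta>s \<ge> 1 / \<alpha>}
    = (LINT z2:{0<..}|lborel. (LINT z1:{b z2..}|lborel. exp (- (z1^2 + z2^2) / 2) / (2 * pi)))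
    + (LINT z2:{..<0}|lborel. (LINT z1:{..b z2}|lborel. exp (- (z1^2 + z2^2) / 2) / (2 * pi)))"
    using t1 t2 by simp
  show ?thesis unfolding main b_def ..
qed

end
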